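(* Let $V>0$, $C_0>0$, $A>0$, $0<\delta<1$ with $\delta\neq\frac14$, and $\epsilon$ with $\frac{4\delta}{3\delta+1}\le\epsilon<1$. Let $R\ge2$, and let $E,y:[R,\infty)\to\mathbb R$ be functions with the following properties: 1. $E-y$ is continuous and piecewise differentiable, with $\frac{d(E-y)}{dr}=\frac{y}{r}$ wherever it is differentiable; 2. $|y(r)|\le C_0r^{-1/3}|E(r)|^{4/3}$ for all $r\ge R$; 3. $|E(r)-RV|\le A(r^\delta+R^\epsilon)$ for all $r\ge R$. Then there is a constant $A''$ depending only on $V,C_0,A,\delta,\epsilon$ such that $$|E(r)-RV|\le A''R^\epsilon\qquad\text{for all } r\ge R.$$
   Context: In the paper this is applied with $R=r_k$, $V=\mathrm{Vol}(Y)$, $E=\hat E$ the energy of the min-max generator, and $y=y_2=(\hat{cs}+2\hat e_\mu)/r$, starting from $\delta=\frac{31}{33}$ and $\epsilon=\frac{62}{63}$. *)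

theory Defs
  imports "HOL-Analysis.Analysis"
begin

end

theory Submission
  imports Defs
begin


lemma core:
  fixes F y g G :: "real \<Rightarrow> real"
  assumes "0 < a" "a \<le> b" "R \<le> a"
   and pd: "F piecewise_differentiable_on {R..b}"
   and der: "\<forall>r>R. F differentiable (at r) \<longrightarrow> (F has_real_derivative y r / r) (at r)"
   and yb: "\<forall>s\<in>{a..b}. \<bar>y s\<bar> \<le> g s"
   and Gd: "\<forall>s\<in>{a..b}. (G has_real_derivative g s / s) (at s)"
  shows "\<bar>F b - F a\<bar> \<le> G b - G a"
proof -
  obtain S where S: "finite S" "\<forall>x\<in>{R..b} - S. F differentiable (at x within {R..b})"
    and cont: "continuous_on {R..b} F"
    using pd unfolding piecewise_differentiable_on_def by blast
  have dF: "(F has_vector_derivative y x / x) (at x)" if x: "x \<in> {a<..<b} - S" for x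
  proof -
    have "x \<in> interior {R..b}" using x assms by auto
    moreover have "x \<in> {R..b} - S" using x assms by auto
    ultimately have "F differentiable (at x)" using S(2) at_within_interior[of x "{R..b}"] by metis
    then have "(F has_real_derivative y x / x) (at x)" using der x assms by auto
    then show ?thesis using has_real_derivative_iff_has_vector_derivative by blast
  qed
  have I1: "((\<lambda>x. y x / x) has_integral F b - F a) {a..b}"
    apply (rule fundamental_theorem_of_calculus_interior_strong[OF S(1) \<open>a \<le> b\<close>])
    using dF apply blast
    using cont continuous_on_subset assms by fastforce
  have I2: "((\<lambda>x. g x / x) has_integral G b - G a) {a..b}"
    apply (rule fundamental_theorem_of_calculus[OF \<open>a \<le> b\<close>])
    using Gd has_real_derivative_iff_has_vector_derivative has_vector_derivative_at_within by blast
  have I3: "((\<lambda>x. - (g x / x)) has_integral - (G b - G a)) {a..b}"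
    using has_integral_neg[OF I2] .
  have l1: "F b - F a \<le> G b - G a"
    apply (rule has_integral_le[OF I1 I2])
  proof -
    fix x assume "x \<in> {a..b}"
    then have "y x \<le> g x" "x > 0" using yb assms by force+
    then show "y x / x \<le> g x / x" by (simp add: divide_right_mono)
  qed
  have l2: "- (G b - G a) \<le> F b - F a"
    apply (rule has_integral_le[OF I3 I1])
  proof -
    fix x assume "x \<in> {a..b}"
    then have "- g x \<le> y x" "x > 0" using yb assms by force+
    then show "- (g x / x) \<le> y x / x" using divide_right_mono[of "- g x" "y x" x] by simp
  qed
  show ?thesis using l1 l2 by linarith
qed



lemma Gder:
  fixes s c K \<beta> :: real
  assumes "s > 0" "\<beta> \<noteq> 0"
  shows "((\<lambda>t. -3*c*t powr (-1/3) + K/\<beta> * t powr \<beta>) has_real_derivative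
     (c * s powr (-1/3) + K * s powr \<beta>)/s) (at s)"
proof -
  have "((\<lambda>t. -3*c*t powr (-1/3) + K/\<beta> * t powr \<beta>) has_real_derivative
     -3*c*((-1/3) * s powr (-1/3 - 1)) + K/\<beta> * (\<beta> * s powr (\<beta> - 1))) (at s)"
    using assms by (auto intro!: derivative_eq_intros)
  moreover have "-3*c*((-1/3) * s powr (-1/3 - 1)) + K/\<beta> * (\<beta> * s powr (\<beta> - 1))
      = (c * s powr (-1/3) + K * s powr \<beta>)/s"
  proof -
    have h1: "s powr (-1/3 - 1) = s powr (-1/3) / s" using powr_diff[of s "-1/3" 1] assms by simp
    have h2: "s powr (\<beta> - 1) = s powr \<beta> / s" using powr_diff[of s \<beta> 1] assms by simp
    show ?thesis unfolding h1 h2 using assms by (simp add: field_simps)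
  qed
  ultimately show ?thesis by simp
qed

lemma pw:
  fixes x z \<beta> :: real
  assumes "1 \<le> x" "x \<le> z"
  shows "x powr \<beta> \<le> z powr \<beta> + 1"
proof (cases "\<beta> \<ge> 0")
  case True
  then have "x powr \<beta> \<le> z powr \<beta>" using assms by (intro powr_mono2) auto
  then show ?thesis by simp
next
  case False
  then have "x powr \<beta> \<le> 1" using assms powr_mono[of \<beta> 0 x] by simp
  moreover have "z powr \<beta> \<ge> 0" by simp
  ultimately show ?thesis by linarith
qed

lemma powsum:
  fixes a b :: real
  assumes "a \<ge> 0" "b \<ge> 0"
  shows "(a+b) powr (4/3) \<le> 2 powr (4/3) * (a powr (4/3) + b powr (4/3))"
proof -
  have "(a+b) powr (4/3) \<le> (2 * max a b) powr (4/3)"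
    using assms by (intro powr_mono2) auto
  also have "\<dots> = 2 powr (4/3) * (max a b) powr (4/3)"
    using assms by (simp add: powr_mult)
  also have "(max a b) powr (4/3) \<le> a powr (4/3) + b powr (4/3)"
    by (cases "a \<le> b") (auto simp: max_def)
  finally show ?thesis by simp
qed


definition Hyp :: "real \<Rightarrow> real \<Rightarrow> (real \<Rightarrow> real) \<Rightarrow> (real \<Rightarrow> real) \<Rightarrow> bool" where
"Hyp C0 R E y \<longleftrightarrow> R \<ge> 2 \<and> (\<forall>b. (\<lambda>s. E s - y s) piecewise_differentiable_on {R..b}) \<and>
   (\<forall>r. r > R \<longrightarrow> (\<lambda>s. E s - y s) differentiable (at r) \<longrightarrow> ((\<lambda>s. E s - y s) has_real_derivative y r / r) (at r)) \<and>
   (\<forall>r. r \<ge> R \<longrightarrow> \<bar>y r\<bar> \<le> C0 * r powr (-1/3) * \<bar>E r\<bar> powr (4/3))"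

definition B3 :: "real \<Rightarrow> real \<Rightarrow> real \<Rightarrow> real \<Rightarrow> real \<Rightarrow> (real \<Rightarrow> real) \<Rightarrow> bool" where
"B3 V \<epsilon> A \<beta> R E \<longleftrightarrow> (\<forall>r. r \<ge> R \<longrightarrow> \<bar>E r - R*V\<bar> \<le> A * (r powr \<beta> + R powr \<epsilon>))"

lemma step:
  fixes V C0 A \<delta> \<epsilon> \<beta> :: real
  assumes "V>0" "C0>0" "A>0" "0<\<delta>" "\<delta>\<le>1" "0<\<epsilon>" "\<epsilon><1" "4*\<delta>/(3*\<delta>+1) \<le> \<epsilon>" "\<beta>\<noteq>0" "(4*\<delta>-1)/3 \<le> \<beta>"
  shows "\<exists>A'>0. \<forall>R E y. Hyp C0 R E y \<and> B3 V \<epsilon> A \<delta> R E \<longrightarrow> B3 V \<epsilon> A' \<beta> R E"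
proof -
  define K1 where "K1 = C0 * 2 powr (4/3) * V powr (4/3)"
  define K2 where "K2 = C0 * 2 powr (4/3) * (2*A) powr (4/3)"
  define Q where "Q = K2/\<bar>\<beta>\<bar>"
  define A' where "A' = 2*A + 5*K1 + 2*K2 + 2*Q"
  have K1: "K1 > 0" unfolding K1_def using assms by simp
  have K2: "K2 > 0" unfolding K2_def using assms by simp
  have Q: "Q > 0" unfolding Q_def using K2 assms by simp
  have A': "A' > 0" unfolding A'_def using K1 K2 Q assms by simp
  have h4: "4*\<delta> \<le> \<epsilon>*(3*\<delta>+1)" using assms(8) assms(4) by (simp add: divide_le_eq)
  have key_exp: "4/3 + \<epsilon>/\<delta>*(-1/3) \<le> \<epsilon>"
  proof -
    have "4/3 + \<epsilon>/\<delta>*(-1/3) = (4*\<delta> - \<epsilon>)/(3*\<delta>)" using assms(4) by (simp add: field_simps)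
    also have "\<dots> \<le> \<epsilon>" using h4 assms(4) by (simp add: divide_le_eq algebra_simps)
    finally show ?thesis .
  qed
  have ed: "\<delta> \<le> \<epsilon>"
  proof -
    have "\<delta>*(3*\<delta>+1) \<le> 4*\<delta>" using assms(4,5) by (simp add: algebra_simps)
    then have "\<delta> \<le> 4*\<delta>/(3*\<delta>+1)" using assms(4) by (simp add: le_divide_eq)
    then show ?thesis using assms(8) by linarith
  qed
  show ?thesis
  proof (intro exI[of _ A'] conjI allI impI A')
    fix R E y assume HB: "Hyp C0 R E y \<and> B3 V \<epsilon> A \<delta> R E"
    have R2: "R \<ge> 2" and pd: "\<forall>b. (\<lambda>s. E s - y s) piecewise_differentiable_on {R..b}"
      and der: "\<forall>r. r > R \<longrightarrow> (\<lambda>s. E s - y s) differentiable (at r) \<longrightarrow> ((\<lambda>s. E s - y s) has_real_derivative y r / r) (at r)"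
      and ybnd: "\<forall>r. r \<ge> R \<longrightarrow> \<bar>y r\<bar> \<le> C0 * r powr (-1/3) * \<bar>E r\<bar> powr (4/3)"
      and b3: "\<forall>r. r \<ge> R \<longrightarrow> \<bar>E r - R*V\<bar> \<le> A * (r powr \<delta> + R powr \<epsilon>)"
      using HB unfolding Hyp_def B3_def by auto
    define M where "M = R powr \<epsilon>"
    define \<rho> where "\<rho> = R powr (\<epsilon>/\<delta>)"
    have M1: "M \<ge> 1" unfolding M_def using R2 assms by (simp add: ge_one_powr_ge_zero)
    have \<rho>R: "R \<le> \<rho>"
    proof -
      have "1 \<le> \<epsilon>/\<delta>" using ed assms(4) by simp
      then have "R powr 1 \<le> R powr (\<epsilon>/\<delta>)" using R2 by (intro powr_mono) auto
      then show ?thesis unfolding \<rho>_def using R2 by simp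
    qed
    have \<rho>\<delta>: "\<rho> powr \<delta> = M" unfolding \<rho>_def M_def using assms(4) by (simp add: powr_powr)
    have cross: "R powr (4/3) * \<rho> powr (-1/3) \<le> M"
    proof -
      have "R powr (4/3) * \<rho> powr (-1/3) = R powr (4/3 + \<epsilon>/\<delta>*(-1/3))"
        unfolding \<rho>_def powr_powr by (rule powr_add[symmetric])
      also have "\<dots> \<le> R powr \<epsilon>" using key_exp R2 by (intro powr_mono) auto
      finally show ?thesis unfolding M_def .
    qed
    define c where "c = K1 * R powr (4/3)"
    have c: "c \<ge> 0" unfolding c_def using K1 by simp
    define g where "g = (\<lambda>s. c * s powr (-1/3) + K2 * s powr \<beta>)"
    have gb: "\<bar>y s\<bar> \<le> g s" if s: "s \<ge> \<rho>" for s
    proof -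
      have sR: "s \<ge> R" "s \<ge> 1" using s \<rho>R R2 by auto
      have "M \<le> s powr \<delta>" using \<rho>\<delta> s \<rho>R R2 assms(4) powr_mono2[of \<delta> \<rho> s] by auto
      then have "A*M \<le> A*(s powr \<delta>)" using assms(3) by simp
      moreover have "\<bar>E s - R*V\<bar> \<le> A*(s powr \<delta>) + A*M" using b3 sR distrib_left[of A "s powr \<delta>" M] unfolding M_def by metis
      moreover have "R*V \<ge> 0" using R2 assms(1) by simp
      ultimately have Eb: "\<bar>E s\<bar> \<le> R*V + 2*A*(s powr \<delta>)" by linarith
      have "\<bar>E s\<bar> powr (4/3) \<le> (R*V + 2*A*(s powr \<delta>)) powr (4/3)" using Eb by (intro powr_mono2) auto
      also have "\<dots> \<le> 2 powr (4/3) * ((R*V) powr (4/3) + (2*A*(s powr \<delta>)) powr (4/3))"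
        using R2 assms by (intro powsum) auto
      also have "(R*V) powr (4/3) = R powr (4/3) * V powr (4/3)" using R2 assms by (simp add: powr_mult)
      also have "(2*A*(s powr \<delta>)) powr (4/3) = (2*A) powr (4/3) * s powr (\<delta>*(4/3))"
        using assms sR by (simp add: powr_mult powr_powr)
      finally have Ep: "\<bar>E s\<bar> powr (4/3) \<le> 2 powr (4/3) * (R powr (4/3) * V powr (4/3) + (2*A) powr (4/3) * s powr (\<delta>*(4/3)))" .
      have sp: "s powr (-1/3) * s powr (\<delta>*(4/3)) \<le> s powr \<beta>"
      proof -
        have "s powr (-1/3) * s powr (\<delta>*(4/3)) = s powr (-1/3 + \<delta>*(4/3))" by (rule powr_add[symmetric])
        also have "\<dots> \<le> s powr \<beta>" using assms(10) sR by (intro powr_mono) auto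
        finally show ?thesis .
      qed
      have "\<bar>y s\<bar> \<le> C0 * s powr (-1/3) * \<bar>E s\<bar> powr (4/3)" using ybnd sR by auto
      also have "\<dots> \<le> C0 * s powr (-1/3) * (2 powr (4/3) * (R powr (4/3) * V powr (4/3) + (2*A) powr (4/3) * s powr (\<delta>*(4/3))))"
        using Ep assms(2) by (intro mult_left_mono) auto
      also have "\<dots> = c * s powr (-1/3) + K2 * (s powr (-1/3) * s powr (\<delta>*(4/3)))"
        unfolding c_def K1_def K2_def by (simp add: algebra_simps)
      also have "\<dots> \<le> c * s powr (-1/3) + K2 * s powr \<beta>" using sp K2 by (intro add_left_mono mult_left_mono) auto
      finally show ?thesis unfolding g_def .
    qed
    show "B3 V \<epsilon> A' \<beta> R E" unfolding B3_def
    proof (intro allI impI)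
      fix r assume rR: "R \<le> r"
      have P: "r powr \<beta> \<ge> 0" by simp
      show "\<bar>E r - R*V\<bar> \<le> A' * (r powr \<beta> + R powr \<epsilon>)"
      proof (cases "r \<le> \<rho>")
        case True
        have "r powr \<delta> \<le> M" using \<rho>\<delta> True rR R2 assms(4) powr_mono2[of \<delta> r \<rho>] by auto
        then have "A*(r powr \<delta>) \<le> A*M" using assms(3) by simp
        moreover have "\<bar>E r - R*V\<bar> \<le> A*(r powr \<delta>) + A*M" using b3 rR distrib_left[of A "r powr \<delta>" M] unfolding M_def by metis
        ultimately have "\<bar>E r - R*V\<bar> \<le> 2*A*M" by linarith
        also have "\<dots> \<le> A' * (r powr \<beta> + M)"
        proof -
          have "A' * (r powr \<beta> + M) = 2*A*M + (5*K1 + 2*K2 + 2*Q)*M + A' * r powr \<beta>"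
            unfolding A'_def by (simp add: algebra_simps)
          moreover have "(5*K1 + 2*K2 + 2*Q)*M \<ge> 0" using K1 K2 Q M1 by simp
          moreover have "A' * r powr \<beta> \<ge> 0" using A' by simp
          ultimately show ?thesis by linarith
        qed
        finally show ?thesis unfolding M_def .
      next
        case False
        have \<rho>0: "\<rho> > 0" using \<rho>R R2 by simp
        define G where "G = (\<lambda>t. -3*c*t powr (-1/3) + K2/\<beta> * t powr \<beta>)"
        have FG: "\<bar>(E r - y r) - (E \<rho> - y \<rho>)\<bar> \<le> G r - G \<rho>"
        proof -
          have "\<bar>(\<lambda>s. E s - y s) r - (\<lambda>s. E s - y s) \<rho>\<bar> \<le> G r - G \<rho>"
          proof (rule core[of \<rho> r R _ y g])
            show "\<forall>s\<in>{\<rho>..r}. \<bar>y s\<bar> \<le> g s" using gb by auto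
            show "\<forall>s\<in>{\<rho>..r}. (G has_real_derivative g s / s) (at s)"
              unfolding G_def g_def using Gder \<rho>0 assms(9) by auto
          qed (use \<rho>0 False \<rho>R pd der in auto)
          then show ?thesis by simp
        qed
        have p\<rho>: "\<rho> powr \<beta> \<le> r powr \<beta> + M" using pw[of \<rho> r \<beta>] \<rho>R R2 False M1 by auto
        have cM: "c * \<rho> powr (-1/3) \<le> K1 * M" using cross K1 unfolding c_def
          by (metis mult.assoc mult_left_mono less_imp_le)
        have r\<rho>: "r powr (-1/3) \<le> \<rho> powr (-1/3)" using False \<rho>0 by (intro powr_mono2') auto
        have crM: "c * r powr (-1/3) \<le> K1 * M" using cM r\<rho> c
          by (meson mult_left_mono order_trans)
        have Gdiff: "G r - G \<rho> \<le> 3*(K1*M) + Q*(r powr \<beta> + \<rho> powr \<beta>)"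
        proof -
          have "G r - G \<rho> = 3*(c*\<rho> powr (-1/3)) - 3*(c * r powr (-1/3)) + K2/\<beta> * (r powr \<beta> - \<rho> powr \<beta>)"
            unfolding G_def by (simp add: algebra_simps)
          moreover have "K2/\<beta> * (r powr \<beta> - \<rho> powr \<beta>) \<le> Q*(r powr \<beta> + \<rho> powr \<beta>)"
          proof -
            have "K2/\<beta> * (r powr \<beta> - \<rho> powr \<beta>) \<le> \<bar>K2/\<beta> * (r powr \<beta> - \<rho> powr \<beta>)\<bar>" by (rule abs_ge_self)
            also have "\<dots> = Q * \<bar>r powr \<beta> - \<rho> powr \<beta>\<bar>" unfolding Q_def using K2 by (simp add: abs_mult)
            also have "\<dots> \<le> Q*(r powr \<beta> + \<rho> powr \<beta>)"
            proof -
              have "r powr \<beta> \<ge> 0" "\<rho> powr \<beta> \<ge> 0" by simp_all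
              then have "\<bar>r powr \<beta> - \<rho> powr \<beta>\<bar> \<le> r powr \<beta> + \<rho> powr \<beta>" by linarith
              then show ?thesis using Q by (intro mult_left_mono) auto
            qed
            finally show ?thesis .
          qed
          moreover have "c * r powr (-1/3) \<ge> 0" using c by simp
          ultimately show ?thesis using cM by linarith
        qed
        have y\<rho>: "\<bar>y \<rho>\<bar> \<le> K1*M + K2*(r powr \<beta> + M)"
        proof -
          have "\<bar>y \<rho>\<bar> \<le> c * \<rho> powr (-1/3) + K2 * \<rho> powr \<beta>" using gb[of \<rho>] unfolding g_def by simp
          moreover have "K2 * \<rho> powr \<beta> \<le> K2*(r powr \<beta> + M)" using p\<rho> K2 by simp
          ultimately show ?thesis using cM by linarith
        qed
        have yr: "\<bar>y r\<bar> \<le> K1*M + K2*r powr \<beta>"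
          using gb[of r] False crM unfolding g_def by simp
        have E\<rho>: "\<bar>E \<rho> - R*V\<bar> \<le> 2*A*M" using b3 \<rho>R \<rho>\<delta> unfolding M_def by force
        have QP: "Q*(r powr \<beta> + \<rho> powr \<beta>) \<le> Q*(2*r powr \<beta> + M)" using p\<rho> Q by simp
        have "E r - R*V = ((E r - y r) - (E \<rho> - y \<rho>)) + (E \<rho> - R*V) - y \<rho> + y r" by simp
        then have "\<bar>E r - R*V\<bar> \<le> (3*(K1*M) + Q*(2*r powr \<beta> + M)) + 2*A*M + (K1*M + K2*(r powr \<beta> + M)) + (K1*M + K2*r powr \<beta>)"
          using FG Gdiff QP y\<rho> yr E\<rho> by linarith
        also have "\<dots> \<le> A' * (r powr \<beta> + M)"
        proof -
          have "A' * (r powr \<beta> + M) - ((3*(K1*M) + Q*(2*r powr \<beta> + M)) + 2*A*M + (K1*M + K2*(r powr \<beta> + M)) + (K1*M + K2*r powr \<beta>))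
             = 2*A*r powr \<beta> + 5*K1*r powr \<beta> + K2*M + Q*M"
            unfolding A'_def by (simp add: algebra_simps)
          moreover have "2*A*r powr \<beta> + 5*K1*r powr \<beta> + K2*M + Q*M \<ge> 0" using assms(3) K1 K2 Q M1 by simp
          ultimately show ?thesis by linarith
        qed
        finally show ?thesis unfolding M_def .
      qed
    qed
  qed
qed


lemma monof:
  fixes \<delta> \<delta>0 :: real
  assumes "0 < \<delta>" "\<delta> \<le> \<delta>0"
  shows "4*\<delta>/(3*\<delta>+1) \<le> 4*\<delta>0/(3*\<delta>0+1)"
proof -
  have "4*\<delta>*(3*\<delta>0+1) \<le> 4*\<delta>0*(3*\<delta>+1)" using assms by (simp add: algebra_simps)
  then show ?thesis using assms by (simp add: divide_simps)
qed

lemma fin: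
  fixes V C0 A \<delta> \<epsilon> :: real
  assumes "V>0" "C0>0" "A>0" "0<\<delta>" "\<delta><1/4" "0<\<epsilon>" "\<epsilon><1" "4*\<delta>/(3*\<delta>+1) \<le> \<epsilon>"
  shows "\<exists>A''. \<forall>R E y. Hyp C0 R E y \<and> B3 V \<epsilon> A \<delta> R E \<longrightarrow> (\<forall>r. r \<ge> R \<longrightarrow> \<bar>E r - R*V\<bar> \<le> A'' * R powr \<epsilon>)"
proof -
  obtain A' where A': "A'>0" and H: "\<forall>R E y. Hyp C0 R E y \<and> B3 V \<epsilon> A \<delta> R E \<longrightarrow> B3 V \<epsilon> A' ((4*\<delta>-1)/3) R E"
    using step[of V C0 A \<delta> \<epsilon> "(4*\<delta>-1)/3"] assms by auto
  show ?thesis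
  proof (intro exI[of _ "2*A'"] allI impI)
    fix R E y r assume h: "Hyp C0 R E y \<and> B3 V \<epsilon> A \<delta> R E" and rR: "R \<le> r"
    have R2: "R \<ge> 2" using h Hyp_def by auto
    have a: "\<bar>E r - R*V\<bar> \<le> A' * (r powr ((4*\<delta>-1)/3) + R powr \<epsilon>)" using H h rR unfolding B3_def by blast
    have "r powr ((4*\<delta>-1)/3) \<le> r powr 0" using rR R2 assms by (intro powr_mono) auto
    then have b: "r powr ((4*\<delta>-1)/3) \<le> 1" using rR R2 by simp
    have c: "1 \<le> R powr \<epsilon>" using R2 assms by (simp add: ge_one_powr_ge_zero)
    have "A' * (r powr ((4*\<delta>-1)/3) + R powr \<epsilon>) \<le> A' * (2 * R powr \<epsilon>)"
      using b c A' by (intro mult_left_mono) auto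
    then show "\<bar>E r - R*V\<bar> \<le> 2*A' * R powr \<epsilon>" using a by simp
  qed
qed

lemma iter:
  fixes V C0 \<epsilon> c \<delta>0 :: real
  assumes "V>0" "C0>0" "0<\<epsilon>" "\<epsilon><1" "0<\<delta>0" "\<delta>0<1" "4*\<delta>0/(3*\<delta>0+1) \<le> \<epsilon>" "c = min ((1-\<delta>0)/3) (1/8)"
  shows "\<forall>\<delta> A. 0<\<delta> \<and> \<delta> \<le> \<delta>0 \<and> \<delta> < 1/4 + real n * c \<and> A > 0 \<longrightarrow>
     (\<exists>A''. \<forall>R E y. Hyp C0 R E y \<and> B3 V \<epsilon> A \<delta> R E \<longrightarrow> (\<forall>r. r \<ge> R \<longrightarrow> \<bar>E r - R*V\<bar> \<le> A'' * R powr \<epsilon>))"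
proof (induction n)
  case 0
  show ?case
  proof (intro allI impI)
    fix \<delta> A :: real assume h: "0<\<delta> \<and> \<delta> \<le> \<delta>0 \<and> \<delta> < 1/4 + real 0 * c \<and> A > 0"
    have "4*\<delta>/(3*\<delta>+1) \<le> \<epsilon>" using monof[of \<delta> \<delta>0] h assms by linarith
    then show "\<exists>A''. \<forall>R E y. Hyp C0 R E y \<and> B3 V \<epsilon> A \<delta> R E \<longrightarrow> (\<forall>r. r \<ge> R \<longrightarrow> \<bar>E r - R*V\<bar> \<le> A'' * R powr \<epsilon>)"
      using fin[of V C0 A \<delta> \<epsilon>] h assms by auto
  qed
next
  case (Suc n)
  show ?case
  proof (intro allI impI)
    fix \<delta> A :: real assume h: "0<\<delta> \<and> \<delta> \<le> \<delta>0 \<and> \<delta> < 1/4 + real (Suc n) * c \<and> A > 0"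
    have e: "4*\<delta>/(3*\<delta>+1) \<le> \<epsilon>" using monof[of \<delta> \<delta>0] h assms by linarith
    show "\<exists>A''. \<forall>R E y. Hyp C0 R E y \<and> B3 V \<epsilon> A \<delta> R E \<longrightarrow> (\<forall>r. r \<ge> R \<longrightarrow> \<bar>E r - R*V\<bar> \<le> A'' * R powr \<epsilon>)"
    proof (cases "\<delta> < 1/4")
      case True
      then show ?thesis using fin[of V C0 A \<delta> \<epsilon>] h assms e by auto
    next
      case False
      define \<beta> where "\<beta> = max ((4*\<delta>-1)/3) (1/8)"
      have b1: "\<beta> > 0" "(4*\<delta>-1)/3 \<le> \<beta>" unfolding \<beta>_def by auto
      have cle: "c \<le> (1-\<delta>0)/3" "c \<le> 1/8" unfolding assms(8) by (rule min.cobounded1, rule min.cobounded2)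
      have b2: "\<beta> \<le> \<delta> - c" unfolding \<beta>_def using cle h False by auto
      have b3: "\<beta> < 1/4 + real n * c" using b2 h by (simp add: algebra_simps)
      have cpos: "c > 0" using assms by auto
      have b4: "\<beta> \<le> \<delta>0" using b2 h cpos by linarith
      obtain A' where A': "A'>0" and H: "\<forall>R E y. Hyp C0 R E y \<and> B3 V \<epsilon> A \<delta> R E \<longrightarrow> B3 V \<epsilon> A' \<beta> R E"
        using step[of V C0 A \<delta> \<epsilon> \<beta>] assms h e b1 by auto
      obtain A'' where A'': "\<forall>R E y. Hyp C0 R E y \<and> B3 V \<epsilon> A' \<beta> R E \<longrightarrow> (\<forall>r. r \<ge> R \<longrightarrow> \<bar>E r - R*V\<bar> \<le> A'' * R powr \<epsilon>)"
        using Suc.IH b1 b3 b4 A' by blast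
      show ?thesis using H A'' by blast
    qed
  qed
qed



theorem mainTheorem12:
  fixes V C\<^sub>0 A \<delta> \<epsilon> :: real
  assumes "V > 0" and "C\<^sub>0 > 0" and "A > 0"
    and "0 < \<delta>" and "\<delta> < 1" and "\<delta> \<noteq> 1/4"
    and "4 * \<delta> / (3 * \<delta> + 1) \<le> \<epsilon>" and "\<epsilon> < 1"
  shows "\<exists>A''::real. \<forall>(R::real) (E::real \<Rightarrow> real) (y::real \<Rightarrow> real).
    R \<ge> 2 \<and>
    continuous_on {R..} (\<lambda>s. E s - y s) \<and>
    (\<forall>b. (\<lambda>s. E s - y s) piecewise_differentiable_on {R..b}) \<and>
    (\<forall>r. r > R \<longrightarrow> (\<lambda>s. E s - y s) differentiable (at r) \<longrightarrow>
        ((\<lambda>s. E s - y s) has_real_derivative y r / r) (at r)) \<and>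
    (\<forall>r. r \<ge> R \<longrightarrow> \<bar>y r\<bar> \<le> C\<^sub>0 * r powr (-1/3) * \<bar>E r\<bar> powr (4/3)) \<and>
    (\<forall>r. r \<ge> R \<longrightarrow> \<bar>E r - R * V\<bar> \<le> A * (r powr \<delta> + R powr \<epsilon>))
    \<longrightarrow> (\<forall>r. r \<ge> R \<longrightarrow> \<bar>E r - R * V\<bar> \<le> A'' * R powr \<epsilon>)"
  proof -
  let ?d0 = "\<delta>" and ?c = "min ((1-\<delta>)/3) (1/8)"
  have eps: "0 < \<epsilon>"
  proof -
    have "0 < 4*\<delta>/(3*\<delta>+1)" using assms by simp
    then show ?thesis using assms by linarith
  qed
  have cpos: "?c > 0" using assms by auto
  obtain n where n: "\<delta> - 1/4 < real n * ?c" using reals_Archimedean3[OF cpos] by blast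
  obtain A'' where A'': "\<forall>R E y. Hyp C\<^sub>0 R E y \<and> B3 V \<epsilon> A \<delta> R E \<longrightarrow> (\<forall>r. r \<ge> R \<longrightarrow> \<bar>E r - R*V\<bar> \<le> A'' * R powr \<epsilon>)"
  proof -
    have "0<\<delta> \<and> \<delta> \<le> \<delta> \<and> \<delta> < 1/4 + real n * ?c \<and> A > 0" using assms n by auto
    then have "\<exists>A''. \<forall>R E y. Hyp C\<^sub>0 R E y \<and> B3 V \<epsilon> A \<delta> R E \<longrightarrow> (\<forall>r. r \<ge> R \<longrightarrow> \<bar>E r - R*V\<bar> \<le> A'' * R powr \<epsilon>)"
      using iter[of V "C\<^sub>0" \<epsilon> \<delta> ?c n, OF assms(1,2) eps assms(8) assms(4) assms(5) assms(7) refl] by blast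
    then show ?thesis using that by blast
  qed
  show ?thesis
  proof (rule exI[of _ A''], (rule allI)+, rule impI)
    fix R E y assume h: "R \<ge> 2 \<and>
    continuous_on {R..} (\<lambda>s. E s - y s) \<and>
    (\<forall>b. (\<lambda>s. E s - y s) piecewise_differentiable_on {R..b}) \<and>
    (\<forall>r. r > R \<longrightarrow> (\<lambda>s. E s - y s) differentiable (at r) \<longrightarrow>
        ((\<lambda>s. E s - y s) has_real_derivative y r / r) (at r)) \<and>
    (\<forall>r. r \<ge> R \<longrightarrow> \<bar>y r\<bar> \<le> C\<^sub>0 * r powr (-1/3) * \<bar>E r\<bar> powr (4/3)) \<and>
    (\<forall>r. r \<ge> R \<longrightarrow> \<bar>E r - R * V\<bar> \<le> A * (r powr \<delta> + R powr \<epsilon>))"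
    then have "Hyp C\<^sub>0 R E y \<and> B3 V \<epsilon> A \<delta> R E" unfolding Hyp_def B3_def by auto
    then show "\<forall>r. r \<ge> R \<longrightarrow> \<bar>E r - R * V\<bar> \<le> A'' * R powr \<epsilon>" using A'' by blast
  qed
qed

end
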